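(* Let $H$ satisfy the standing assumptions (H), let $L(\alpha):=\sup_{p\in\mathbb R^d}(\langle p,\alpha\rangle-H(p))$ be its Legendre transform, let $m\in\mathscr C^{1,2}_{\mathrm{per}}((0,T)\times\mathbb T^d)$ and let $(\lambda_H(m),\varphi_H)$ be the eigenpair of $\partial_t-\Delta+H(\nabla_x\cdot)+m$. For a bounded, $T$-periodic in $t$, vector field $\alpha:(0,T)\times\mathbb T^d\to\mathbb R^d$, let $\eta_\alpha$ be the unique solution of \[-\partial_t\eta_\alpha-\Delta\eta_\alpha-\nabla\cdot(\alpha\eta_\alpha)=0,\quad\eta_\alpha(T,\cdot)=\eta_\alpha(0,\cdot),\quad\eta_\alpha\ge0,\quad\int_{\mathbb T^d}\eta_\alpha(t,\cdot)=\tfrac1T .\] Then for every such $\alpha$, \[\iint_{(0,T)\times\mathbb T^d}\big(m-L(\alpha)\big)\,d\eta_\alpha\le-\lambda_H(m),\] with equality for $\alpha=\nabla_pH(\nabla_x\varphi_H)$; hence $-\lambda_H(m)=\max_\alpha\iint(m-L(\alpha))\,d\eta_\alpha$.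
   Context: $\mathbb T^d$ is the $d$-dimensional torus and $T>0$ is fixed. $\mathscr C^{1,2}_{\mathrm{per}}((0,T)\times\mathbb T^d)$ denotes functions that are $T$-periodic in $t$, $\mathbb T^d$-periodic in $x$, $\mathscr C^1$ in $t$ and $\mathscr C^2$ in $x$. Standing assumptions (H) on $H:\mathbb R^d\to\mathbb R$: $H$ is $\mathscr C^2$; $H(p)>H(0)=0$ for $p\neq0$; $\nabla^2_{pp}H(p)$ is symmetric positive definite for $p\neq 0$; there is a continuous, coercive, convex, non-negative function $\mathcal H$ on $[0,\infty)$ with $\mathcal H(a)>\mathcal H(0)=0$ for $a>0$ such that $\mathcal H\big(\|f-\frac{1}{|\mathbb T^d|}\int_{\mathbb T^d}f\|_{L^1(\mathbb T^d)}\big)\le\int_{\mathbb T^d}H(\nabla f)$ for every $f\in\mathscr C^2(\mathbb T^d)$; and there is $\beta\in(0,1)$ with $aH(p)\ge H(a^\beta p)$ for all $a\in(0,1)$, $p\in\mathbb R^d$. Eigenpair: $(\lambda_H(m),\varphi_H)$ is the unique pair with $\lambda_H(m)\in\mathbb R$, $\varphi_H\in\mathscr C^{1,2}_{\mathrm{per}}$, $\iint\varphi_H=0$, and $\lambda_H(m)+\partial_t\varphi_H-\Delta\varphi_H+H(\nabla_x\varphi_H)=-m$ in $(0,T)\times\mathbb T^d$. The measures $\eta_\alpha$ are regarded as probability measures on $(0,T)\times\mathbb T^d$. *)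

theory Defs
  imports "HOL-Analysis.Analysis"
begin

text \<open>The torus T^d is represented by Z^d-periodic functions on real^'d
  (unit torus, fundamental cell the unit cube).  Time-space functions have
  type real => real^'d => real.\<close>

definition pd :: "(real^'d \<Rightarrow> real) \<Rightarrow> real^'d \<Rightarrow> 'd \<Rightarrow> real" where
  "pd f x i = deriv (\<lambda>h. f (x + h *\<^sub>R axis i 1)) 0"

definition gradv :: "(real^'d \<Rightarrow> real) \<Rightarrow> real^'d \<Rightarrow> real^'d" where
  "gradv f x = (\<chi> i. pd f x i)"

definition hessv :: "(real^'d \<Rightarrow> real) \<Rightarrow> real^'d \<Rightarrow> real^'d^'d" where
  "hessv f x = (\<chi> i j. pd (\<lambda>y. pd f y i) x j)"

definition dt :: "(real \<Rightarrow> real^'d \<Rightarrow> real) \<Rightarrow> real \<Rightarrow> real^'d \<Rightarrow> real" where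
  "dt u t x = deriv (\<lambda>s. u s x) t"

definition grad_x :: "(real \<Rightarrow> real^'d \<Rightarrow> real) \<Rightarrow> real \<Rightarrow> real^'d \<Rightarrow> real^'d" where
  "grad_x u t x = gradv (u t) x"

definition lap_x :: "(real \<Rightarrow> real^'d \<Rightarrow> real) \<Rightarrow> real \<Rightarrow> real^'d \<Rightarrow> real" where
  "lap_x u t x = (\<Sum>i\<in>UNIV. pd (\<lambda>y. pd (u t) y i) x i)"

text \<open>Unit cell of the torus (closed, for Lebesgue integrals) and half-open
  fundamental domain (for measures).\<close>
definition cell :: "(real^'d) set" where
  "cell = cbox 0 One"

definition hcell :: "(real^'d) set" where
  "hcell = {x. \<forall>i. 0 \<le> x $ i \<and> x $ i < 1}"

definition periodic_x :: "(real^'d \<Rightarrow> 'b) \<Rightarrow> bool" where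
  "periodic_x f \<longleftrightarrow> (\<forall>x i. f (x + axis i 1) = f x)"

definition C2per :: "(real^'d \<Rightarrow> real) \<Rightarrow> bool" where
  "C2per f \<longleftrightarrow> periodic_x f \<and>
     (\<exists>fx fxx. continuous_on UNIV f \<and> continuous_on UNIV fx \<and> continuous_on UNIV fxx \<and>
        (\<forall>x. (f has_derivative (\<lambda>h. fx x \<bullet> h)) (at x)) \<and>
        (\<forall>x. (fx has_derivative (\<lambda>h. fxx x *v h)) (at x)))"

definition C12per :: "real \<Rightarrow> (real \<Rightarrow> real^'d \<Rightarrow> real) \<Rightarrow> bool" where
  "C12per T u \<longleftrightarrow>
     (\<forall>t x. u (t + T) x = u t x) \<and> (\<forall>t. periodic_x (u t)) \<and>
     (\<exists>ut ux uxx.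
        continuous_on UNIV (\<lambda>z. u (fst z) (snd z)) \<and>
        continuous_on UNIV (\<lambda>z. ut (fst z) (snd z)) \<and>
        continuous_on UNIV (\<lambda>z. ux (fst z) (snd z)) \<and>
        continuous_on UNIV (\<lambda>z. uxx (fst z) (snd z) :: real^'d^'d) \<and>
        (\<forall>t x. ((\<lambda>s. u s x) has_real_derivative ut t x) (at t)) \<and>
        (\<forall>t x. (u t has_derivative (\<lambda>h. ux t x \<bullet> h)) (at x)) \<and>
        (\<forall>t x. (ux t has_derivative (\<lambda>h. uxx t x *v h)) (at x)))"

definition H_assms :: "(real^'d \<Rightarrow> real) \<Rightarrow> bool" where
  "H_assms H \<longleftrightarrow>
     (\<exists>DH D2H. (\<forall>p. (H has_derivative (\<lambda>h. DH p \<bullet> h)) (at p)) \<and>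
               (\<forall>p. (DH has_derivative (\<lambda>h. D2H p *v h)) (at p)) \<and>
               continuous_on UNIV (D2H :: real^'d \<Rightarrow> real^'d^'d)) \<and>
     H 0 = 0 \<and> (\<forall>p. p \<noteq> 0 \<longrightarrow> H p > 0) \<and>
     (\<forall>p. p \<noteq> 0 \<longrightarrow> transpose (hessv H p) = hessv H p \<and>
                       (\<forall>v. v \<noteq> 0 \<longrightarrow> v \<bullet> (hessv H p *v v) > 0)) \<and>
     (\<exists>\<H> :: real \<Rightarrow> real.
        continuous_on {0..} \<H> \<and> convex_on {0..} \<H> \<and> filterlim \<H> at_top at_top \<and>
        (\<forall>a\<ge>0. \<H> a \<ge> 0) \<and> \<H> 0 = 0 \<and> (\<forall>a>0. \<H> a > 0) \<and>
        (\<forall>f. C2per f \<longrightarrow>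
           \<H> (\<integral>x\<in>cell. \<bar>f x - (\<integral>y\<in>cell. f y \<partial>lborel) / measure lborel (cell :: (real^'d) set)\<bar> \<partial>lborel)
             \<le> (\<integral>x\<in>cell. H (gradv f x) \<partial>lborel))) \<and>
     (\<exists>\<beta>. 0 < \<beta> \<and> \<beta> < 1 \<and> (\<forall>a p. 0 < a \<and> a < 1 \<longrightarrow> a * H p \<ge> H ((a powr \<beta>) *\<^sub>R p)))"

definition legendre :: "(real^'d \<Rightarrow> real) \<Rightarrow> real^'d \<Rightarrow> real" where
  "legendre H a = (SUP p. p \<bullet> a - H p)"

definition admissible :: "real \<Rightarrow> (real \<Rightarrow> real^'d \<Rightarrow> real^'d) \<Rightarrow> bool" where
  "admissible T \<alpha> \<longleftrightarrow>
     (\<lambda>z. \<alpha> (fst z) (snd z)) \<in> borel_measurable borel \<and>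
     (\<exists>B. \<forall>t x. norm (\<alpha> t x) \<le> B) \<and>
     (\<forall>t x. \<alpha> (t + T) x = \<alpha> t x) \<and> (\<forall>t. periodic_x (\<alpha> t))"

text \<open>eta is a (weak, measure-valued) solution of
  -d_t eta - Lap eta - div(alpha eta) = 0, eta(T)=eta(0), eta >= 0,
  int_{T^d} eta(t) = 1/T, viewed as a probability measure on [0,T) x T^d.
  Time-periodicity is encoded through the periodic test functions.\<close>
definition fp_sol :: "real \<Rightarrow> (real \<Rightarrow> real^'d \<Rightarrow> real^'d) \<Rightarrow> (real \<times> (real^'d)) measure \<Rightarrow> bool" where
  "fp_sol T \<alpha> \<eta> \<longleftrightarrow>
     sets \<eta> = sets borel \<and> emeasure \<eta> (space \<eta>) = 1 \<and>
     emeasure \<eta> ({0..<T} \<times> hcell) = 1 \<and>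
     (\<forall>A \<in> sets borel. A \<subseteq> {0..<T} \<longrightarrow> measure \<eta> (A \<times> hcell) = measure lborel A / T) \<and>
     (\<forall>\<psi>. C12per T \<psi> \<longrightarrow>
        (\<integral>z. dt \<psi> (fst z) (snd z) - lap_x \<psi> (fst z) (snd z)
               + \<alpha> (fst z) (snd z) \<bullet> grad_x \<psi> (fst z) (snd z) \<partial>\<eta>) = 0)"

end

theory Submission
  imports Defs
begin


lemma pd_eq:
  fixes F :: "real^'d \<Rightarrow> real"
  assumes "(F has_derivative F') (at x)"
  shows "pd F x j = F' (axis j 1)"
proof -
  have lin: "linear F'" using assms has_derivative_linear by blast
  have d1: "((\<lambda>h::real. x + h *\<^sub>R axis j 1) has_derivative (\<lambda>h. h *\<^sub>R axis j 1)) (at 0)"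
    by (auto intro!: derivative_eq_intros)
  have "((\<lambda>h. F (x + h *\<^sub>R axis j 1)) has_derivative (\<lambda>h. F' (h *\<^sub>R axis j 1))) (at 0)"
    using has_derivative_compose[OF d1] assms by (simp add: o_def)
  moreover have "(\<lambda>h. F' (h *\<^sub>R axis j 1)) = (*) (F' (axis j 1))"
    using lin by (simp add: linear_scale fun_eq_iff)
  ultimately have "((\<lambda>h. F (x + h *\<^sub>R axis j 1)) has_real_derivative F' (axis j 1)) (at 0)"
    by (simp add: has_field_derivative_def)
  then show ?thesis unfolding pd_def by (rule DERIV_imp_deriv)
qed

lemma gradv_eq:
  fixes F :: "real^'d \<Rightarrow> real"
  assumes "(F has_derivative (\<lambda>h. D \<bullet> h)) (at x)"
  shows "gradv F x = D"
  using pd_eq[OF assms] by (simp add: gradv_def vec_eq_iff inner_axis)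

lemma hess_eq:
  fixes F :: "real^'d \<Rightarrow> real"
  assumes "\<And>y. (F has_derivative (\<lambda>h. D y \<bullet> h)) (at y)"
    and "(D has_derivative (\<lambda>h. D2 *v h)) (at x)"
  shows "pd (\<lambda>y. pd F y i) x j = D2 $ i $ j"
proof -
  have e: "(\<lambda>y. pd F y i) = (\<lambda>y. D y $ i)"
    using pd_eq[OF assms(1)] by (simp add: inner_axis)
  have "((\<lambda>y. D y $ i) has_derivative (\<lambda>h. (D2 *v h) $ i)) (at x)"
    using bounded_linear.has_derivative[OF bounded_linear_vec_nth assms(2)] .
  then have "pd (\<lambda>y. D y $ i) x j = (D2 *v axis j 1) $ i" by (rule pd_eq)
  then show ?thesis using e by (simp add: matrix_vector_mult_def axis_def if_distrib cong: if_cong)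
qed

lemma hessv_eq:
  fixes F :: "real^'d \<Rightarrow> real"
  assumes "\<And>y. (F has_derivative (\<lambda>h. D y \<bullet> h)) (at y)"
    and "\<And>y. (D has_derivative (\<lambda>h. D2 y *v h)) (at y)"
  shows "hessv F x = D2 x"
  using hess_eq[OF assms(1) assms(2)] by (simp add: hessv_def vec_eq_iff)

lemma hd_to_rd: "(f has_derivative (\<lambda>h. h * c)) F \<Longrightarrow> (f has_real_derivative c) F"
  by (simp add: has_field_derivative_def mult_commute_abs)

lemma H_tangent:
  fixes H :: "real^'d \<Rightarrow> real"
  assumes dH: "\<And>p. (H has_derivative (\<lambda>h. DH p \<bullet> h)) (at p)"
    and d2H: "\<And>p. (DH has_derivative (\<lambda>h. D2H p *v h)) (at p)"
    and c2: "continuous_on UNIV D2H"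
    and pos: "\<forall>p. p \<noteq> 0 \<longrightarrow> (\<forall>v. v \<noteq> 0 \<longrightarrow> v \<bullet> (hessv H p *v v) > 0)"
  shows "H p + DH p \<bullet> (q - p) \<le> H q"
proof -
  have hv: "hessv H y = D2H y" for y using hessv_eq[OF dH d2H] .
  define v where "v = q - p"
  define Q where "Q y = v \<bullet> (D2H y *v v)" for y
  have "continuous_on UNIV (\<lambda>y. D2H y *v v)"
    using c2 unfolding matrix_vector_mult_def
    by (intro continuous_on_vec_lambda continuous_intros)
  then have Qc: "continuous_on UNIV Q" unfolding Q_def
    by (intro continuous_intros)
  have Qnz: "Q y \<ge> 0" if "y \<noteq> 0" for y
  proof (cases "v = 0")
    case True then show ?thesis by (simp add: Q_def)
  next
    case False then show ?thesis using pos that hv unfolding Q_def by (metis less_imp_le)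
  qed
  have Q0: "Q y \<ge> 0" for y
  proof (cases "y = 0")
    case False then show ?thesis by (rule Qnz)
  next
    case True
    obtain w :: "real^'d" where w: "w \<noteq> 0"
      using that[of 1] by (simp add: vec_eq_iff)
    have "(\<lambda>n. inverse (real (Suc n)) *\<^sub>R w) \<longlonglongrightarrow> 0 *\<^sub>R w"
      by (intro tendsto_intros LIMSEQ_inverse_real_of_nat)
    then have lim: "(\<lambda>n. Q (inverse (real (Suc n)) *\<^sub>R w)) \<longlonglongrightarrow> Q 0"
      using continuous_on_tendsto_compose[OF Qc] by simp
    have nn: "\<forall>n. Q (inverse (real (Suc n)) *\<^sub>R w) \<ge> 0"
      using w by (intro allI Qnz) simp
    have "0 \<le> Q 0" using lim by (rule LIMSEQ_le_const) (use nn in blast)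
    then show ?thesis using True by simp
  qed
  define g where "g s = H (p + s *\<^sub>R v)" for s :: real
  define g' where "g' s = DH (p + s *\<^sub>R v) \<bullet> v" for s :: real
  have dl: "((\<lambda>s::real. p + s *\<^sub>R v) has_derivative (\<lambda>h. h *\<^sub>R v)) (at s)" for s
    by (auto intro!: derivative_eq_intros)
  have gd: "(g has_real_derivative g' s) (at s)" for s
  proof -
    have "(g has_derivative (\<lambda>h. DH (p + s *\<^sub>R v) \<bullet> (h *\<^sub>R v))) (at s)"
      unfolding g_def using has_derivative_compose[OF dl dH] by (simp add: o_def)
    then show ?thesis unfolding g'_def by (intro hd_to_rd) (simp add: mult.commute)
  qed
  have g'd: "(g' has_real_derivative Q (p + s *\<^sub>R v)) (at s)" for s
  proof -
    have "((\<lambda>s. DH (p + s *\<^sub>R v)) has_derivative (\<lambda>h. D2H (p + s *\<^sub>R v) *v (h *\<^sub>R v))) (at s)"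
      using has_derivative_compose[OF dl d2H] by (simp add: o_def)
    then have "(g' has_derivative (\<lambda>h. v \<bullet> (D2H (p + s *\<^sub>R v) *v (h *\<^sub>R v)))) (at s)"
      unfolding g'_def using bounded_linear.has_derivative[OF bounded_linear_inner_right[of v]]
      by (simp add: inner_commute)
    then show ?thesis unfolding Q_def
      by (intro hd_to_rd) (simp add: mult.commute matrix_vector_mult_scaleR)
  qed
  have mono: "g' x \<le> g' y" if "x \<le> y" for x y
    using DERIV_nonneg_imp_nondecreasing[OF that] g'd Q0 by blast
  have cvx: "convex_on UNIV g"
    by (rule convex_on_realI[where f'=g']) (auto intro: gd mono)
  have "g' 0 * (1 - 0) \<le> g 1 - g 0"
    by (rule convex_on_imp_above_tangent[OF cvx]) (auto intro: has_field_derivative_at_within gd)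
  then show ?thesis by (simp add: g_def g'_def v_def)
qed



lemma H_growth:
  fixes H :: "real^'d \<Rightarrow> real"
  assumes Hc: "continuous_on UNIV H" and Hpos: "\<forall>p. p \<noteq> 0 \<longrightarrow> H p > 0"
    and b: "0 < \<beta>" "\<beta> < 1" and hb: "\<forall>a p. 0 < a \<and> a < 1 \<longrightarrow> a * H p \<ge> H ((a powr \<beta>) *\<^sub>R p)"
  shows "\<exists>c>0. \<forall>p. norm p \<ge> 1 \<longrightarrow> H p \<ge> c * norm p powr (1/\<beta>)"
proof -
  let ?S = "sphere (0::real^'d) 1"
  have "?S \<noteq> {}" by (simp add: sphere_eq_empty)
  then obtain u0 where u0: "u0 \<in> ?S" "\<And>u. u \<in> ?S \<Longrightarrow> H u0 \<le> H u"
    using continuous_attains_inf[OF compact_sphere _ continuous_on_subset[OF Hc]] by blast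
  define c where "c = H u0"
  have "u0 \<noteq> 0" using u0(1) by auto
  then have c: "c > 0" using Hpos by (auto simp: c_def)
  have "H p \<ge> c * norm p powr (1/\<beta>)" if p: "norm p \<ge> 1" for p
  proof (cases "norm p = 1")
    case True then show ?thesis using u0 by (auto simp: c_def)
  next
    case False
    define s where "s = norm p"
    have s: "s > 1" using p False by (auto simp: s_def)
    define a where "a = (1/s) powr (1/\<beta>)"
    have a0: "0 < a" using s by (simp add: a_def)
    have a1: "a < 1" unfolding a_def using s b by (subst powr01_less_one) auto
    have ab: "a powr \<beta> = 1/s" unfolding a_def using s b by (simp add: powr_powr)
    have "a * H p \<ge> H ((1/s) *\<^sub>R p)" using hb a0 a1 ab by metis
    moreover have "H ((1/s) *\<^sub>R p) \<ge> c" unfolding c_def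
      by (rule u0(2)) (use s in \<open>auto simp add: s_def\<close>)
    ultimately have "a * H p \<ge> c" by linarith
    then have "H p \<ge> c / a" using a0 by (simp add: field_simps)
    moreover have "c / a = c * s powr (1/\<beta>)" unfolding a_def using s
      by (simp add: powr_divide)
    ultimately show ?thesis by (simp add: s_def)
  qed
  then show ?thesis using c by blast
qed

lemma H_conj_bound:
  fixes H :: "real^'d \<Rightarrow> real"
  assumes Hc: "continuous_on UNIV H" and Hpos: "\<forall>p. p \<noteq> 0 \<longrightarrow> H p > 0" and H0: "H 0 = 0"
    and b: "0 < \<beta>" "\<beta> < 1" and hb: "\<forall>a p. 0 < a \<and> a < 1 \<longrightarrow> a * H p \<ge> H ((a powr \<beta>) *\<^sub>R p)"
    and B: "B \<ge> 0"
  shows "\<exists>K. \<forall>a p. norm a \<le> B \<longrightarrow> p \<bullet> a - H p \<le> K"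
proof -
  obtain c where c: "c > 0" and hc: "\<And>p. norm p \<ge> 1 \<Longrightarrow> H p \<ge> c * norm p powr (1/\<beta>)"
    using H_growth[OF Hc Hpos b hb] by blast
  have Hnn: "H p \<ge> 0" for p using Hpos H0 by (cases "p = 0") (auto intro: less_imp_le)
  define r where "r = 1/\<beta> - 1"
  have r: "r > 0" using b by (simp add: r_def field_simps)
  define S0 where "S0 = max 1 ((B/c) powr (1/r))"
  have "p \<bullet> a - H p \<le> B * S0" if a: "norm a \<le> B" for a p
  proof -
    have pa: "p \<bullet> a \<le> norm p * B"
      by (meson Cauchy_Schwarz_ineq2 a mult_left_mono norm_ge_zero order_trans abs_le_iff)
    show ?thesis
    proof (cases "norm p \<le> 1")
      case True
      then have "norm p * B \<le> B" using B by (simp add: mult_left_le_one_le)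
      moreover have "B \<le> B * S0" using B by (simp add: S0_def mult_le_cancel_left1)
      ultimately show ?thesis using pa Hnn[of p] by linarith
    next
      case False
      define s where "s = norm p"
      have s: "s > 1" using False by (simp add: s_def)
      have sp: "s powr (1/\<beta>) = s * s powr r" proof -
        have "s * s powr r = s powr 1 * s powr r" using s by simp
        also have "\<dots> = s powr (1 + r)" using s by (simp add: powr_add)
        finally show ?thesis by (simp add: r_def)
      qed
      have Hp: "H p \<ge> c * (s * s powr r)" using hc[of p] s sp by (simp add: s_def)
      show ?thesis
      proof (cases "s \<le> S0")
        case True
        have "c * (s * s powr r) \<ge> 0" using c s by simp
        then have "p \<bullet> a - H p \<le> s * B" using pa Hp by (simp add: s_def)
        also have "\<dots> \<le> S0 * B" using True B by (simp add: mult_right_mono)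
        finally show ?thesis by (simp add: mult.commute)
      next
        case False
        have "s powr r \<ge> ((B/c) powr (1/r)) powr r"
          using False r by (intro powr_mono2) (auto simp: S0_def)
        also have "((B/c) powr (1/r)) powr r = B / c"
          using r B c by (cases "B = 0") (simp_all add: powr_powr)
        finally have "c * s powr r \<ge> B" using c by (simp add: field_simps)
        then have "c * (s * s powr r) \<ge> s * B" using s
          by (metis mult.left_commute mult_left_mono less_imp_le zero_less_one less_trans)
        then have "p \<bullet> a - H p \<le> 0" using pa Hp by (simp add: s_def)
        moreover have "0 \<le> B * S0" using B by (simp add: S0_def)
        ultimately show ?thesis by linarith
      qed
    qed
  qed
  then show ?thesis by blast
qed



locale legctx =
  fixes H :: "real^'d \<Rightarrow> real"
  assumes Kb: "\<And>B. B \<ge> 0 \<Longrightarrow> \<exists>K. \<forall>a p. norm a \<le> B \<longrightarrow> p \<bullet> a - H p \<le> K"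
begin

lemma bdd: "bdd_above (range (\<lambda>p. p \<bullet> a - H p))"
proof -
  obtain K where "\<forall>a' p. norm a' \<le> norm a \<longrightarrow> p \<bullet> a' - H p \<le> K" using Kb[of "norm a"] by auto
  then show ?thesis by (auto intro!: bdd_aboveI2)
qed

lemma leg_ge: "p \<bullet> a - H p \<le> legendre H a"
  unfolding legendre_def by (rule cSUP_upper[OF _ bdd]) simp

lemma leg_le: "(\<And>p. p \<bullet> a - H p \<le> K) \<Longrightarrow> legendre H a \<le> K"
  unfolding legendre_def by (rule cSUP_least) auto

lemma leg_bound: "B \<ge> 0 \<Longrightarrow> \<exists>K. \<forall>a. norm a \<le> B \<longrightarrow> legendre H a \<le> K"
  using Kb leg_le by metis

lemma leg_convex: "convex_on UNIV (legendre H)"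
proof
  fix x y :: "real^'d" and t :: real
  assume t: "0 < t" "t < 1"
  show "legendre H ((1 - t) *\<^sub>R x + t *\<^sub>R y) \<le> (1 - t) * legendre H x + t * legendre H y"
  proof (rule leg_le)
    fix p
    have "p \<bullet> ((1 - t) *\<^sub>R x + t *\<^sub>R y) - H p = (1-t) * (p \<bullet> x - H p) + t * (p \<bullet> y - H p)"
      by (simp add: inner_add_right algebra_simps)
    also have "\<dots> \<le> (1 - t) * legendre H x + t * legendre H y"
      using t by (intro add_mono mult_left_mono leg_ge) auto
    finally show "p \<bullet> ((1 - t) *\<^sub>R x + t *\<^sub>R y) - H p \<le> (1 - t) * legendre H x + t * legendre H y" .
  qed
qed simp

lemma leg_cont: "continuous_on UNIV (legendre H)"
  by (rule convex_on_continuous[OF open_UNIV leg_convex])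

end



lemma per_int:
  fixes g :: "real \<Rightarrow> 'b"
  assumes "\<And>y. g (y + c) = g y"
  shows "g (y + of_int k * c) = g y"
proof -
  have n: "g (y + real n * c) = g y" for n y
    by (induction n arbitrary: y) (auto simp: distrib_right assms add.assoc[symmetric])
  show ?thesis
  proof (cases "k \<ge> 0")
    case True then show ?thesis using n[where n="nat k" and y=y] by simp
  next
    case False
    then have "g ((y + of_int k * c) + real (nat (-k)) * c) = g (y + of_int k * c)" using n by blast
    then show ?thesis using False by simp
  qed
qed

lemma perx_int:
  assumes "periodic_x g"
  shows "g (x + of_int k *\<^sub>R axis i 1) = g x"
proof -
  have "(\<lambda>s::real. g (x + s *\<^sub>R axis i 1)) (0 + of_int k * 1) = (\<lambda>s. g (x + s *\<^sub>R axis i 1)) 0"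
    by (rule per_int) (use assms in \<open>simp add: periodic_x_def scaleR_add_left add.assoc[symmetric]\<close>)
  then show ?thesis by simp
qed

lemma perx_sum:
  assumes "periodic_x g" "finite S"
  shows "g (x + (\<Sum>i\<in>S. of_int (k i) *\<^sub>R axis i 1)) = g x"
  using assms(2)
proof (induction S arbitrary: x rule: finite_induct)
  case empty then show ?case by simp
next
  case (insert j S)
  have "g (x + (\<Sum>i\<in>insert j S. of_int (k i) *\<^sub>R axis i 1))
      = g ((x + (\<Sum>i\<in>S. of_int (k i) *\<^sub>R axis i 1)) + of_int (k j) *\<^sub>R axis j 1)"
    using insert by (simp add: algebra_simps)
  also have "\<dots> = g (x + (\<Sum>i\<in>S. of_int (k i) *\<^sub>R axis i 1))" by (rule perx_int[OF assms(1)])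
  also have "\<dots> = g x" by (rule insert.IH)
  finally show ?case .
qed

lemma One_nth: "(One :: real^'d) $ i = 1"
  by (metis Cart_1 one_index)

lemma per_reduce:
  fixes f :: "real \<Rightarrow> real^'d \<Rightarrow> 'b"
  assumes T: "T > 0" and pt: "\<forall>t x. f (t + T) x = f t x" and px: "\<forall>t. periodic_x (f t)"
  shows "\<exists>t' x'. t' \<in> {0..T} \<and> x' \<in> cbox 0 One \<and> f t x = f t' x'"
proof -
  define t' where "t' = t + of_int (- \<lfloor>t/T\<rfloor>) * T"
  define x' where "x' = x + (\<Sum>i\<in>UNIV. of_int (- \<lfloor>x$i\<rfloor>) *\<^sub>R axis i (1::real))"
  have e1: "f t' = f t" unfolding t'_def
    by (rule per_int[where g="\<lambda>s. f s"]) (use pt in auto)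
  have e2: "f t x' = f t x" unfolding x'_def by (rule perx_sum) (use px in auto)
  have A: "t' \<in> {0..T}"
  proof -
    have f1: "of_int \<lfloor>t/T\<rfloor> \<le> t/T" "t/T < of_int \<lfloor>t/T\<rfloor> + 1" by linarith+
    have "of_int \<lfloor>t/T\<rfloor> * T \<le> t" using f1(1) T by (simp only: pos_le_divide_eq)
    moreover have "t < (of_int \<lfloor>t/T\<rfloor> + 1) * T" using f1(2) T by (simp only: pos_divide_less_eq)
    ultimately show ?thesis unfolding t'_def by (auto simp: algebra_simps)
  qed
  have B: "x' \<in> cbox 0 One"
  proof -
    have c: "x' $ i = x $ i - of_int \<lfloor>x$i\<rfloor>" for i
          proof -
      have "(\<Sum>j\<in>UNIV. of_int (- \<lfloor>x$j\<rfloor>) *\<^sub>R axis j (1::real)) $ i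
          = (\<Sum>j\<in>UNIV. of_int (- \<lfloor>x$j\<rfloor>) * (if i = j then 1 else 0))"
        unfolding sum_component vector_scaleR_component axis_def vec_lambda_beta by simp
      also have "\<dots> = (\<Sum>j\<in>UNIV. if i = j then of_int (- \<lfloor>x$j\<rfloor>) else 0)"
        by (rule sum.cong) auto
      also have "\<dots> = of_int (- \<lfloor>x$i\<rfloor>)"
        by (subst sum.delta') auto
      finally show ?thesis unfolding x'_def vector_add_component by simp
    qed
    have "0 \<le> x' $ i \<and> x' $ i \<le> 1" for i unfolding c by linarith
    then show ?thesis unfolding mem_box_cart One_nth by simp
  qed
  have C: "f t x = f t' x'" using e1 e2 by simp
  show ?thesis
    apply (rule exI[of _ t'], rule exI[of _ x'])
    using A B C by (intro conjI)
qed

lemma per_bounded: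
  fixes f :: "real \<Rightarrow> real^'d \<Rightarrow> 'b::real_normed_vector"
  assumes T: "T > 0" and pt: "\<forall>t x. f (t + T) x = f t x" and px: "\<forall>t. periodic_x (f t)"
    and c: "continuous_on UNIV (\<lambda>z. f (fst z) (snd z))"
  shows "\<exists>B. \<forall>t x. norm (f t x) \<le> B"
proof -
  have "compact ((\<lambda>z. f (fst z) (snd z)) ` ({0..T} \<times> cbox 0 One))"
    by (intro compact_continuous_image continuous_on_subset[OF c] compact_Times) auto
  then have "bounded ((\<lambda>z. f (fst z) (snd z)) ` ({0..T} \<times> cbox 0 One))"
    by (rule compact_imp_bounded)
  then obtain B where B: "\<forall>y \<in> (\<lambda>z. f (fst z) (snd z)) ` ({0..T} \<times> cbox 0 One). norm y \<le> B"
    unfolding bounded_iff by (elim exE) (rule that)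
  have "norm (f t x) \<le> B" for t x
  proof -
    obtain t' x' where "t' \<in> {0..T}" "x' \<in> cbox 0 One" "f t x = f t' x'"
      using per_reduce[OF T pt px] by blast
    then show ?thesis using B by (metis (no_types, lifting) SigmaI fst_conv image_eqI snd_conv)
  qed
  then show ?thesis by blast
qed




lemma hcell_sets: "hcell \<in> sets (borel :: (real^'d) measure)"
  unfolding hcell_def by measurable

lemma compact_bound:
  fixes F :: "'a::topological_space \<Rightarrow> 'b::real_normed_vector"
  assumes "continuous_on UNIV F" "compact K"
  shows "\<exists>B. \<forall>z\<in>K. norm (F z) \<le> B"
proof -
  have "bounded (F ` K)"
    by (intro compact_imp_bounded compact_continuous_image continuous_on_subset[OF assms(1)] assms(2)) auto
  then show ?thesis unfolding bounded_iff by auto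
qed

lemma fp_AE:
  fixes \<eta> :: "(real \<times> (real^'d)) measure"
  assumes T: "T > 0" and fp: "fp_sol T \<alpha> \<eta>"
  shows "finite_measure \<eta>" "emeasure \<eta> (space \<eta>) = 1" "space \<eta> = UNIV"
    "AE z in \<eta>. 0 < fst z \<and> fst z < T \<and> snd z \<in> cbox 0 One"
proof -
  have s: "sets \<eta> = sets borel" and e1: "emeasure \<eta> (space \<eta>) = 1"
    and e2: "emeasure \<eta> ({0..<T} \<times> hcell) = 1"
    and e3: "\<forall>A \<in> sets borel. A \<subseteq> {0..<T} \<longrightarrow> measure \<eta> (A \<times> hcell) = measure lborel A / T"
    using fp unfolding fp_sol_def by auto
  show fm: "finite_measure \<eta>" using e1 by (intro finite_measureI) simp
  show "emeasure \<eta> (space \<eta>) = 1" by (rule e1)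
  show sp: "space \<eta> = UNIV" using sets_eq_imp_space_eq[OF s] by simp
  have S1: "{0..<T} \<times> hcell \<in> sets \<eta>" unfolding s
    using hcell_sets by (simp add: borel_prod[symmetric]) (intro pair_measureI, auto)
  have S0: "{0} \<times> hcell \<in> sets \<eta>" unfolding s
    using hcell_sets by (simp add: borel_prod[symmetric]) (intro pair_measureI, auto)
  have "emeasure \<eta> (space \<eta> - {0..<T} \<times> hcell) = emeasure \<eta> (space \<eta>) - emeasure \<eta> ({0..<T} \<times> hcell)"
    by (rule emeasure_compl[OF S1]) (use e2 in simp)
  then have "space \<eta> - {0..<T} \<times> hcell \<in> null_sets \<eta>"
    using e1 e2 S1 by (simp add: null_sets_def)
  then have A1: "AE z in \<eta>. z \<in> {0..<T} \<times> hcell"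
    using AE_not_in by (rule_tac AE_mp[OF AE_not_in]) (auto simp: sp)
  have "measure \<eta> ({0} \<times> hcell) = measure lborel {0::real} / T"
    using e3 T by auto
  then have "measure \<eta> ({0} \<times> hcell) = 0" by simp
  then have "{0} \<times> hcell \<in> null_sets \<eta>"
    using S0 finite_measure.emeasure_eq_measure[OF fm] by (simp add: null_sets_def)
  then have A0: "AE z in \<eta>. z \<notin> {0} \<times> hcell" by (rule AE_not_in)
  show "AE z in \<eta>. 0 < fst z \<and> fst z < T \<and> snd z \<in> cbox 0 One"
    using A1 A0
  proof eventually_elim
    case (elim z)
    then show ?case unfolding mem_box_cart One_nth by (cases z) (auto simp: hcell_def less_imp_le)
  qed
qed

theorem mainTheorem10:
  fixes H :: "real^'d \<Rightarrow> real" and T :: real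
    and m \<phi> :: "real \<Rightarrow> real^'d \<Rightarrow> real" and lam :: real
  assumes T: "T > 0"
    and H: "H_assms H"
    and m: "C12per T m"
    and phi: "C12per T \<phi>"
    and phi_mean: "(\<integral>z\<in>{0..T} \<times> cell. \<phi> (fst z) (snd z) \<partial>lborel) = 0"
    and eig: "\<forall>t x. 0 < t \<and> t < T \<longrightarrow>
                lam + dt \<phi> t x - lap_x \<phi> t x + H (grad_x \<phi> t x) = - m t x"
  shows "(\<forall>\<alpha> \<eta>. admissible T \<alpha> \<longrightarrow> fp_sol T \<alpha> \<eta> \<longrightarrow>
            (\<integral>z. m (fst z) (snd z) - legendre H (\<alpha> (fst z) (snd z)) \<partial>\<eta>) \<le> - lam)
       \<and> admissible T (\<lambda>t x. gradv H (grad_x \<phi> t x))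
       \<and> (\<forall>\<eta>. fp_sol T (\<lambda>t x. gradv H (grad_x \<phi> t x)) \<eta> \<longrightarrow>
            (\<integral>z. m (fst z) (snd z) - legendre H (gradv H (grad_x \<phi> (fst z) (snd z))) \<partial>\<eta>) = - lam)"
proof -
  have Hd: "\<exists>DH D2H. (\<forall>p. (H has_derivative (\<lambda>h. DH p \<bullet> h)) (at p)) \<and>
               (\<forall>p. (DH has_derivative (\<lambda>h. D2H p *v h)) (at p)) \<and>
               continuous_on UNIV (D2H :: real^'d \<Rightarrow> real^'d^'d)"
    using H unfolding H_assms_def by (rule conjunct1)
  then obtain DH D2H where dH: "\<And>p. (H has_derivative (\<lambda>h. DH p \<bullet> h)) (at p)"
    and d2H: "\<And>p. (DH has_derivative (\<lambda>h. D2H p *v h)) (at p)"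
    and c2: "continuous_on UNIV (D2H :: real^'d \<Rightarrow> real^'d^'d)" by blast
  have H0: "H 0 = 0" and Hpos: "\<forall>p. p \<noteq> 0 \<longrightarrow> H p > 0"
    and Hhess: "\<forall>p. p \<noteq> 0 \<longrightarrow> transpose (hessv H p) = hessv H p \<and>
                       (\<forall>v. v \<noteq> 0 \<longrightarrow> v \<bullet> (hessv H p *v v) > 0)"
    and Hb: "\<exists>\<beta>. 0 < \<beta> \<and> \<beta> < 1 \<and> (\<forall>a p. 0 < a \<and> a < 1 \<longrightarrow> a * H p \<ge> H ((a powr \<beta>) *\<^sub>R p))"
    using H unfolding H_assms_def
    by (rule conjunct2[THEN conjunct1], rule conjunct2[THEN conjunct2, THEN conjunct1],
        rule conjunct2[THEN conjunct2, THEN conjunct2, THEN conjunct1],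
        rule conjunct2[THEN conjunct2, THEN conjunct2, THEN conjunct2, THEN conjunct2])
  obtain \<beta> where b: "0 < \<beta>" "\<beta> < 1" and hb: "\<forall>a p. 0 < a \<and> a < 1 \<longrightarrow> a * H p \<ge> H ((a powr \<beta>) *\<^sub>R p)"
    using Hb by blast
  have Hc: "continuous_on UNIV H"
    using dH by (intro continuous_at_imp_continuous_on ballI) (metis has_derivative_continuous)
  have DHc: "continuous_on UNIV DH"
    using d2H by (intro continuous_at_imp_continuous_on ballI) (metis has_derivative_continuous)
  interpret legctx H
  proof
    fix B :: real assume "B \<ge> 0"
    then show "\<exists>K. \<forall>a p. norm a \<le> B \<longrightarrow> p \<bullet> a - H p \<le> K"
      by (rule H_conj_bound[OF Hc Hpos H0 b hb])
  qed
  have tang: "H p + DH p \<bullet> (q - p) \<le> H q" for p q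
    by (rule H_tangent[OF dH d2H c2]) (use Hhess in blast)
  have gH: "gradv H p = DH p" for p by (rule gradv_eq[OF dH])
  have legDH: "legendre H (DH p) = p \<bullet> DH p - H p" for p
  proof (rule antisym)
    show "legendre H (DH p) \<le> p \<bullet> DH p - H p"
    proof (rule leg_le)
      fix q
      show "q \<bullet> DH p - H q \<le> p \<bullet> DH p - H p"
        using tang[of p q] by (simp add: inner_diff_right inner_commute)
    qed
  qed (rule leg_ge)
  have Lnn: "0 \<le> legendre H a" for a using leg_ge[of 0 a] H0 by simp
  obtain ut ux uxx where
      pt: "\<forall>t x. \<phi> (t + T) x = \<phi> t x" and px: "\<forall>t. periodic_x (\<phi> t)"
      and cut: "continuous_on UNIV (\<lambda>z. ut (fst z) (snd z))"
      and cux: "continuous_on UNIV (\<lambda>z. ux (fst z) (snd z))"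
      and cuxx: "continuous_on UNIV (\<lambda>z. uxx (fst z) (snd z) :: real^'d^'d)"
      and dut: "\<forall>t x. ((\<lambda>s. \<phi> s x) has_real_derivative ut t x) (at t)"
      and dux: "\<forall>t x. (\<phi> t has_derivative (\<lambda>h. ux t x \<bullet> h)) (at x)"
      and duxx: "\<forall>t x. (ux t has_derivative (\<lambda>h. uxx t x *v h)) (at x)"
    using phi unfolding C12per_def by blast
  have cm: "continuous_on UNIV (\<lambda>z. m (fst z) (snd z))"
    using m unfolding C12per_def by blast
  have dtphi: "dt \<phi> t x = ut t x" for t x
    unfolding dt_def using dut by (simp add: DERIV_imp_deriv)
  have gphi: "grad_x \<phi> t x = ux t x" for t x
    unfolding grad_x_def using dux by (simp add: gradv_eq)
  have lphi: "lap_x \<phi> t x = (\<Sum>i\<in>UNIV. uxx t x $ i $ i)" for t x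
  proof -
    have "pd (\<lambda>y. pd (\<phi> t) y i) x i = uxx t x $ i $ i" for i
      by (rule hess_eq) (use dux duxx in blast)+
    then show ?thesis unfolding lap_x_def by presburger
  qed
  have clap: "continuous_on UNIV (\<lambda>z. \<Sum>i\<in>UNIV. uxx (fst z) (snd z) $ i $ i)"
    by (intro continuous_intros continuous_on_component cuxx)
  define K where "K = {0..T} \<times> (cbox 0 One :: (real^'d) set)"
  have cK: "compact K" unfolding K_def by (intro compact_Times) auto
  obtain B1 where B1: "\<forall>z\<in>K. norm (ut (fst z) (snd z)) \<le> B1"
    using compact_bound[OF cut cK] by blast
  obtain B2 where B2: "\<forall>z\<in>K. norm (\<Sum>i\<in>UNIV. uxx (fst z) (snd z) $ i $ i) \<le> B2"
    using compact_bound[OF clap cK] by blast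
  obtain B3 where B3: "\<forall>z\<in>K. norm (ux (fst z) (snd z)) \<le> B3"
    using compact_bound[OF cux cK] by blast
  obtain Bm where Bm: "\<forall>z\<in>K. norm (m (fst z) (snd z)) \<le> Bm"
    using compact_bound[OF cm cK] by blast
  have gen: "integrable \<eta> (\<lambda>z. m (fst z) (snd z) - legendre H (\<alpha> (fst z) (snd z)))
      \<and> integrable \<eta> (\<lambda>z. - lam - (dt \<phi> (fst z) (snd z) - lap_x \<phi> (fst z) (snd z)
               + \<alpha> (fst z) (snd z) \<bullet> grad_x \<phi> (fst z) (snd z)))
      \<and> (\<integral>z. - lam - (dt \<phi> (fst z) (snd z) - lap_x \<phi> (fst z) (snd z)
               + \<alpha> (fst z) (snd z) \<bullet> grad_x \<phi> (fst z) (snd z)) \<partial>\<eta>) = - lam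
      \<and> (AE z in \<eta>. 0 < fst z \<and> fst z < T)"
    if adm: "admissible T \<alpha>" and fp: "fp_sol T \<alpha> \<eta>" for \<alpha> \<eta>
  proof -
    have am: "(\<lambda>z. \<alpha> (fst z) (snd z)) \<in> borel_measurable borel"
      and ab: "\<exists>B. \<forall>t x. norm (\<alpha> t x) \<le> B" using adm unfolding admissible_def by auto
    then obtain Ba where Ba: "\<And>t x. norm (\<alpha> t x) \<le> Ba" by blast
    have Ba0: "Ba \<ge> 0" using Ba[of 0 0] norm_ge_zero order_trans by blast
    obtain KL where KL: "\<And>a. norm a \<le> Ba \<Longrightarrow> legendre H a \<le> KL" using leg_bound[OF Ba0] by blast
    have sets: "sets \<eta> = sets borel" using fp unfolding fp_sol_def by blast
    have fm: "finite_measure \<eta>" and e1: "emeasure \<eta> (space \<eta>) = 1"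
      and AEK: "AE z in \<eta>. 0 < fst z \<and> fst z < T \<and> snd z \<in> cbox 0 One"
      using fp_AE[OF T fp] by auto
    have AEK': "AE z in \<eta>. z \<in> K" using AEK
      by eventually_elim (auto simp: K_def mem_Times_iff)
    have meas: "f \<in> borel_measurable \<eta>" if "f \<in> borel_measurable borel" for f :: "_ \<Rightarrow> real"
      using that measurable_cong_sets[OF sets refl] by blast
    define G where "G z = dt \<phi> (fst z) (snd z) - lap_x \<phi> (fst z) (snd z)
               + \<alpha> (fst z) (snd z) \<bullet> grad_x \<phi> (fst z) (snd z)" for z
    have Geq: "G = (\<lambda>z. ut (fst z) (snd z) - (\<Sum>i\<in>UNIV. uxx (fst z) (snd z) $ i $ i)
               + \<alpha> (fst z) (snd z) \<bullet> ux (fst z) (snd z))"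
      by (simp add: G_def fun_eq_iff dtphi lphi gphi)
    have Gm: "G \<in> borel_measurable \<eta>" unfolding Geq
      by (intro meas borel_measurable_add borel_measurable_diff borel_measurable_inner am
          borel_measurable_continuous_onI cut clap cux)
    have Gb: "AE z in \<eta>. norm (G z) \<le> B1 + B2 + Ba * B3" using AEK'
    proof eventually_elim
      case (elim z)
      have "\<bar>\<alpha> (fst z) (snd z) \<bullet> ux (fst z) (snd z)\<bar> \<le> norm (\<alpha> (fst z) (snd z)) * norm (ux (fst z) (snd z))"
        by (rule Cauchy_Schwarz_ineq2)
      also have "\<dots> \<le> Ba * B3" using Ba B3 Ba0 elim by (intro mult_mono) auto
      finally have "\<bar>\<alpha> (fst z) (snd z) \<bullet> ux (fst z) (snd z)\<bar> \<le> Ba * B3" .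
      moreover have "\<bar>ut (fst z) (snd z)\<bar> \<le> B1" using B1 elim by auto
      moreover have "\<bar>\<Sum>i\<in>UNIV. uxx (fst z) (snd z) $ i $ i\<bar> \<le> B2" using B2 elim by auto
      ultimately show ?case unfolding Geq by simp
    qed
    have Gi: "integrable \<eta> G" by (rule finite_measure.integrable_const_bound[OF fm Gb Gm])
    have G0: "(\<integral>z. G z \<partial>\<eta>) = 0"
      using fp phi unfolding fp_sol_def G_def by blast
    have m1: "measure \<eta> (space \<eta>) = 1" using e1 by (simp add: measure_def)
    have I2: "integrable \<eta> (\<lambda>z. - lam - G z)"
      using Gi finite_measure.integrable_const[OF fm] by (intro Bochner_Integration.integrable_diff) auto
    have "(\<integral>z. - lam - G z \<partial>\<eta>) = (\<integral>z. - lam \<partial>\<eta>) - (\<integral>z. G z \<partial>\<eta>)"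
      by (rule Bochner_Integration.integral_diff) (use Gi finite_measure.integrable_const[OF fm] in auto)
    then have I3: "(\<integral>z. - lam - G z \<partial>\<eta>) = - lam"
      using G0 m1 by simp
    have Fm: "(\<lambda>z. m (fst z) (snd z) - legendre H (\<alpha> (fst z) (snd z))) \<in> borel_measurable \<eta>"
      by (intro meas borel_measurable_diff borel_measurable_continuous_onI cm
          measurable_compose[OF am] leg_cont)
    have Fb: "AE z in \<eta>. norm (m (fst z) (snd z) - legendre H (\<alpha> (fst z) (snd z))) \<le> Bm + KL"
      using AEK'
    proof eventually_elim
      case (elim z)
      have "\<bar>m (fst z) (snd z)\<bar> \<le> Bm" using Bm elim by auto
      moreover have "0 \<le> legendre H (\<alpha> (fst z) (snd z))" by (rule Lnn)
      moreover have "legendre H (\<alpha> (fst z) (snd z)) \<le> KL" by (rule KL[OF Ba])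
      ultimately show ?case by simp
    qed
    have I1: "integrable \<eta> (\<lambda>z. m (fst z) (snd z) - legendre H (\<alpha> (fst z) (snd z)))"
      by (rule finite_measure.integrable_const_bound[OF fm Fb Fm])
    show ?thesis using I1 I2 I3 AEK unfolding G_def by (auto elim: AE_mp)
  qed
  have pw: "m t x - legendre H a = - lam - (dt \<phi> t x - lap_x \<phi> t x + a \<bullet> grad_x \<phi> t x)
              + (grad_x \<phi> t x \<bullet> a - H (grad_x \<phi> t x) - legendre H a)"
    if "0 < t" "t < T" for t x a
    using eig that by (auto simp: inner_commute algebra_simps)
  have part1: "(\<integral>z. m (fst z) (snd z) - legendre H (\<alpha> (fst z) (snd z)) \<partial>\<eta>) \<le> - lam"
    if adm: "admissible T \<alpha>" and fp: "fp_sol T \<alpha> \<eta>" for \<alpha> \<eta>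
  proof -
    note g = gen[OF adm fp]
    have "(\<integral>z. m (fst z) (snd z) - legendre H (\<alpha> (fst z) (snd z)) \<partial>\<eta>)
        \<le> (\<integral>z. - lam - (dt \<phi> (fst z) (snd z) - lap_x \<phi> (fst z) (snd z)
               + \<alpha> (fst z) (snd z) \<bullet> grad_x \<phi> (fst z) (snd z)) \<partial>\<eta>)"
    proof (rule integral_mono_AE)
      show "AE z in \<eta>. m (fst z) (snd z) - legendre H (\<alpha> (fst z) (snd z))
          \<le> - lam - (dt \<phi> (fst z) (snd z) - lap_x \<phi> (fst z) (snd z)
               + \<alpha> (fst z) (snd z) \<bullet> grad_x \<phi> (fst z) (snd z))"
        using g[THEN conjunct2, THEN conjunct2, THEN conjunct2]
      proof eventually_elim
        case (elim z)
        then show ?case using pw[of "fst z" "snd z" "\<alpha> (fst z) (snd z)"]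
            leg_ge[of "grad_x \<phi> (fst z) (snd z)" "\<alpha> (fst z) (snd z)"] by linarith
      qed
    qed (use g in auto)
    then show ?thesis using g by simp
  qed
  have geq: "(\<lambda>t x. gradv H (grad_x \<phi> t x)) = (\<lambda>t x. DH (ux t x))"
    by (simp add: fun_eq_iff gH gphi)
  have cA: "continuous_on UNIV (\<lambda>z. DH (ux (fst z) (snd z)))"
    using continuous_on_compose[OF cux continuous_on_subset[OF DHc]] by (simp add: o_def)
  have ptA: "\<forall>t x. gradv H (grad_x \<phi> (t + T) x) = gradv H (grad_x \<phi> t x)"
  proof (intro allI)
    fix t x
    have "\<phi> (t + T) = \<phi> t" using pt by auto
    then show "gradv H (grad_x \<phi> (t + T) x) = gradv H (grad_x \<phi> t x)" by (simp add: grad_x_def)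
  qed
  have pxA: "\<forall>t. periodic_x (\<lambda>x. gradv H (grad_x \<phi> t x))"
  proof (intro allI)
    fix t
    have "grad_x \<phi> t (x + axis i 1) = grad_x \<phi> t x" for x i
    proof -
      have "(\<lambda>h. \<phi> t (x + axis i 1 + h *\<^sub>R axis j 1)) = (\<lambda>h. \<phi> t (x + h *\<^sub>R axis j 1))" for j
      proof
        fix h
        have "\<phi> t ((x + h *\<^sub>R axis j 1) + axis i 1) = \<phi> t (x + h *\<^sub>R axis j 1)"
          using px unfolding periodic_x_def by blast
        then show "\<phi> t (x + axis i 1 + h *\<^sub>R axis j 1) = \<phi> t (x + h *\<^sub>R axis j 1)"
          by (simp add: algebra_simps)
      qed
      then show ?thesis by (simp add: grad_x_def gradv_def pd_def)
    qed
    then show "periodic_x (\<lambda>x. gradv H (grad_x \<phi> t x))" by (simp add: periodic_x_def)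
  qed
  have part2: "admissible T (\<lambda>t x. gradv H (grad_x \<phi> t x))"
    unfolding admissible_def
  proof (intro conjI)
    show "(\<lambda>z. gradv H (grad_x \<phi> (fst z) (snd z))) \<in> borel_measurable borel"
      using borel_measurable_continuous_onI[OF cA] by (simp add: gH gphi)
    show "\<exists>B. \<forall>t x. norm (gradv H (grad_x \<phi> t x)) \<le> B"
      by (rule per_bounded[OF T ptA pxA]) (use cA in \<open>simp add: gH gphi\<close>)
  qed (use ptA pxA in auto)
  have part3: "(\<integral>z. m (fst z) (snd z) - legendre H (gradv H (grad_x \<phi> (fst z) (snd z))) \<partial>\<eta>) = - lam"
    if fp: "fp_sol T (\<lambda>t x. gradv H (grad_x \<phi> t x)) \<eta>" for \<eta>
  proof -
    let ?A = "\<lambda>t x. gradv H (grad_x \<phi> t x)"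
    note g = gen[OF part2 fp]
    have "(\<integral>z. - lam - (dt \<phi> (fst z) (snd z) - lap_x \<phi> (fst z) (snd z)
               + ?A (fst z) (snd z) \<bullet> grad_x \<phi> (fst z) (snd z)) \<partial>\<eta>)
        \<le> (\<integral>z. m (fst z) (snd z) - legendre H (?A (fst z) (snd z)) \<partial>\<eta>)"
    proof (rule integral_mono_AE)
      show "AE z in \<eta>. - lam - (dt \<phi> (fst z) (snd z) - lap_x \<phi> (fst z) (snd z)
               + ?A (fst z) (snd z) \<bullet> grad_x \<phi> (fst z) (snd z))
          \<le> m (fst z) (snd z) - legendre H (?A (fst z) (snd z))"
        using g[THEN conjunct2, THEN conjunct2, THEN conjunct2]
      proof eventually_elim
        case (elim z)
        then show ?case using pw[of "fst z" "snd z" "?A (fst z) (snd z)"]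
            legDH[of "grad_x \<phi> (fst z) (snd z)"] by (simp add: gH)
      qed
    qed (use g in auto)
    then show ?thesis using g part1[OF part2 fp] by simp
  qed
  show ?thesis using part1 part2 part3 by blast
qed

end
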